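(* Let $(f,\preceq)$ be a flow for a geometry $(G,I,O)$. Then there is a path cover $\mathcal P_f$ of $(G,I,O)$ such that for all vertices $v,w \in V(G)$, $v \to w$ is an arc of some path of $\mathcal P_f$ if and only if $v \in O^c$ and $w = f(v)$.
   Context: All graphs are finite, simple and undirected, with no self-loops; $v \sim w$ denotes adjacency. A geometry is a triple $(G,I,O)$ with $G$ a graph and $I,O\subseteq V(G)$; $O^c = V(G)\setminus O$, $I^c = V(G)\setminus I$. A flow for $(G,I,O)$ is a pair $(f,\preceq)$ with $f:O^c\to I^c$ a function and $\preceq$ a partial order on $V(G)$ such that for all $v\in O^c$, $w\in V(G)$: $v\sim f(v)$; $v\preceq f(v)$; and $w\sim f(v)\Rightarrow v\preceq w$. A directed path in $G$ is a sequence of distinct vertices $u_0,\dots,u_\ell$ ($\ell\ge 0$; $\ell=0$ is a trivial path) with $u_{i}\sim u_{i+1}$, whose arcs are $u_i\to u_{i+1}$. A path cover of $(G,I,O)$ is a collection $\mathcal C$ of directed paths in $G$ such that (i) every vertex of $G$ lies on exactly one path of $\mathcal C$; (ii) each path of $\mathcal C$ is either disjoint from $I$ or meets $I$ only at its initial vertex; (iii) each path of $\mathcal C$ meets $O$ only at its final vertex (in particular, its final vertex lies in $O$). *)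

theory Defs
  imports Main
begin

definition simple_graph :: "'a set \<Rightarrow> ('a \<Rightarrow> 'a \<Rightarrow> bool) \<Rightarrow> bool" where
  "simple_graph V E \<longleftrightarrow> finite V
     \<and> (\<forall>u v. E u v \<longrightarrow> u \<in> V \<and> v \<in> V)
     \<and> (\<forall>u v. E u v \<longrightarrow> E v u)
     \<and> (\<forall>u. \<not> E u u)"

definition geometry :: "'a set \<Rightarrow> ('a \<Rightarrow> 'a \<Rightarrow> bool) \<Rightarrow> 'a set \<Rightarrow> 'a set \<Rightarrow> bool" where
  "geometry V E In Out \<longleftrightarrow> simple_graph V E \<and> In \<subseteq> V \<and> Out \<subseteq> V"

definition is_flow :: "'a set \<Rightarrow> ('a \<Rightarrow> 'a \<Rightarrow> bool) \<Rightarrow> 'a set \<Rightarrow> 'a set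
    \<Rightarrow> ('a \<Rightarrow> 'a) \<Rightarrow> ('a \<times> 'a) set \<Rightarrow> bool" where
  "is_flow V E In Out f le \<longleftrightarrow>
     (\<forall>v \<in> V - Out. f v \<in> V - In)
     \<and> partial_order_on V le
     \<and> (\<forall>v \<in> V - Out. E v (f v))
     \<and> (\<forall>v \<in> V - Out. (v, f v) \<in> le)
     \<and> (\<forall>v \<in> V - Out. \<forall>w \<in> V. E w (f v) \<longrightarrow> (v, w) \<in> le)"

definition directed_path :: "'a set \<Rightarrow> ('a \<Rightarrow> 'a \<Rightarrow> bool) \<Rightarrow> 'a list \<Rightarrow> bool" where
  "directed_path V E p \<longleftrightarrow> p \<noteq> [] \<and> distinct p \<and> set p \<subseteq> V
     \<and> (\<forall>i. Suc i < length p \<longrightarrow> E (p ! i) (p ! Suc i))"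

definition is_arc :: "'a list \<Rightarrow> 'a \<Rightarrow> 'a \<Rightarrow> bool" where
  "is_arc p v w \<longleftrightarrow> (\<exists>i. Suc i < length p \<and> p ! i = v \<and> p ! Suc i = w)"

definition path_cover :: "'a set \<Rightarrow> ('a \<Rightarrow> 'a \<Rightarrow> bool) \<Rightarrow> 'a set \<Rightarrow> 'a set
    \<Rightarrow> 'a list set \<Rightarrow> bool" where
  "path_cover V E In Out C \<longleftrightarrow>
     (\<forall>p \<in> C. directed_path V E p)
     \<and> (\<forall>v \<in> V. \<exists>!p. p \<in> C \<and> v \<in> set p)
     \<and> (\<forall>p \<in> C. set p \<inter> In = {} \<or> set p \<inter> In = {hd p})
     \<and> (\<forall>p \<in> C. set p \<inter> Out = {last p})"

end

theory Submission
  imports Defs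
begin

context
  fixes V :: "'a set" and E :: "'a \<Rightarrow> 'a \<Rightarrow> bool" and In Out :: "'a set"
    and f :: "'a \<Rightarrow> 'a" and le :: "('a \<times> 'a) set"
  assumes fin: "finite V" and Esym: "\<And>u v. E u v \<Longrightarrow> E v u" and Eirr: "\<And>u. \<not> E u u"
    and fV: "\<And>v. v \<in> V - Out \<Longrightarrow> f v \<in> V - In"
    and leV: "le \<subseteq> V \<times> V" and lerefl: "\<And>x. x \<in> V \<Longrightarrow> (x,x) \<in> le"
    and letr: "trans le" and leanti: "antisym le"
    and fE: "\<And>v. v \<in> V - Out \<Longrightarrow> E v (f v)"
    and fle: "\<And>v. v \<in> V - Out \<Longrightarrow> (v, f v) \<in> le"
    and fnb: "\<And>v w. v \<in> V - Out \<Longrightarrow> w \<in> V \<Longrightarrow> E w (f v) \<Longrightarrow> (v, w) \<in> le"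
begin

lemma finj: "u \<in> V - Out \<Longrightarrow> v \<in> V - Out \<Longrightarrow> f u = f v \<Longrightarrow> u = v"
proof -
  assume u: "u \<in> V - Out" and v: "v \<in> V - Out" and e: "f u = f v"
  have "(u,v) \<in> le" using fnb[OF u] fE[OF v] e v by auto
  moreover have "(v,u) \<in> le" using fnb[OF v] fE[OF u] e u by auto
  ultimately show ?thesis using leanti by (auto simp: antisym_def)
qed

lemma chain_le:
  assumes x: "x \<in> V" and D: "\<forall>m<j. (f^^m) x \<in> V - Out" and ij: "i \<le> j"
  shows "((f^^i) x, (f^^j) x) \<in> le \<and> (f^^j) x \<in> V"
  using D ij
proof (induction j)
  case 0
  then show ?case using x lerefl by auto
next
  case (Suc j)
  have d: "(f^^j) x \<in> V - Out" using Suc.prems by auto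
  have s: "((f^^j) x, (f^^Suc j) x) \<in> le" using fle[OF d] by simp
  have v: "(f^^Suc j) x \<in> V" using fV[OF d] by simp
  show ?case
  proof (cases "i = Suc j")
    case True then show ?thesis using v lerefl by auto
  next
    case False
    then have "((f^^i) x, (f^^j) x) \<in> le" using Suc by auto
    then show ?thesis using s v letr by (meson transE)
  qed
qed

lemma chain_dist:
  assumes x: "x \<in> V" and D: "\<forall>m<j. (f^^m) x \<in> V - Out" and ij: "i < j"
  shows "(f^^i) x \<noteq> (f^^j) x"
proof
  assume eq: "(f^^i) x = (f^^j) x"
  have d: "(f^^i) x \<in> V - Out" using D ij by auto
  have a: "((f^^i) x, (f^^Suc i) x) \<in> le" using fle[OF d] by simp
  have b: "((f^^Suc i) x, (f^^j) x) \<in> le" using chain_le[OF x D, of "Suc i"] ij Suc_leI by blast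
  have "(f^^i) x = (f^^Suc i) x" using a b eq leanti by (auto simp: antisym_def)
  then have "(f^^i) x = f ((f^^i) x)" by simp
  then show False using fE[OF d] Eirr by metis
qed

lemma reach_out:
  assumes x: "x \<in> V" shows "\<exists>k. (f^^k) x \<in> Out"
proof (rule ccontr)
  assume "\<not> ?thesis"
  then have nO: "\<And>m. (f^^m) x \<notin> Out" by blast
  have D0: "(f^^m) x \<in> V - Out" for m
  proof (induction m)
    case 0 then show ?case using x nO[of 0] by simp
  next
    case (Suc m) then show ?case using fV nO[of "Suc m"] by auto
  qed
  then have D: "\<And>j. \<forall>m<j. (f^^m) x \<in> V - Out" by blast
  have "inj (\<lambda>k. (f^^k) x)"
    by (rule injI, metis chain_dist[OF x D] linorder_neqE_nat)
  moreover have "range (\<lambda>k. (f^^k) x) \<subseteq> V" using chain_le[OF x D] by blast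
  ultimately have "finite (UNIV :: nat set)"
    using fin by (meson finite_imageD finite_subset)
  then show False by simp
qed

definition S where "S = V - f ` (V - Out)"
definition nn where "nn s = (LEAST k. (f^^k) s \<in> Out)"
definition pth where "pth s = map (\<lambda>i. (f^^i) s) [0..<Suc (nn s)]"

lemma nn_props:
  assumes s: "s \<in> V"
  shows "(f^^nn s) s \<in> Out" "\<And>m. m < nn s \<Longrightarrow> (f^^m) s \<in> V - Out"
proof -
  obtain k where "(f^^k) s \<in> Out" using reach_out[OF s] by blast
  then show "(f^^nn s) s \<in> Out" unfolding nn_def by (rule LeastI)
  have nl: "\<And>m. m < nn s \<Longrightarrow> (f^^m) s \<notin> Out" unfolding nn_def using not_less_Least by blast
  show "\<And>m. m < nn s \<Longrightarrow> (f^^m) s \<in> V - Out"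
  proof -
    fix m assume "m < nn s"
    then show "(f^^m) s \<in> V - Out"
    proof (induction m)
      case 0 then show ?case using s nl[of 0] by auto
    next
      case (Suc m)
      then have "(f^^m) s \<in> V - Out" by auto
      then show ?case using fV nl[of "Suc m"] Suc.prems by auto
    qed
  qed
qed

lemma back_reach:
  assumes v: "v \<in> V"
  shows "\<exists>s\<in>S. \<exists>k. (f^^k) s = v \<and> (\<forall>m<k. (f^^m) s \<in> V - Out)"
  using v
proof (induction "card {w\<in>V. (w,v) \<in> le}" arbitrary: v rule: less_induct)
  case less
  show ?case
  proof (cases "v \<in> S")
    case True
    then show ?thesis by (intro bexI[of _ v] exI[of _ 0]) auto
  next
    case False
    then obtain u where u: "u \<in> V - Out" and uv: "v = f u" using less.prems unfolding S_def by auto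
    have sub: "{w\<in>V. (w,u) \<in> le} \<subseteq> {w\<in>V. (w,v) \<in> le}"
      using fle[OF u] uv letr by (auto elim: transE)
    have vin: "v \<in> {w\<in>V. (w,v) \<in> le}" using less.prems lerefl by auto
    have vnot: "v \<notin> {w\<in>V. (w,u) \<in> le}"
    proof
      assume "v \<in> {w\<in>V. (w,u) \<in> le}"
      then have "u = v" using fle[OF u] uv leanti by (auto simp: antisym_def)
      then show False using fE[OF u] uv Eirr by metis
    qed
    have "card {w\<in>V. (w,u) \<in> le} < card {w\<in>V. (w,v) \<in> le}"
      using sub vin vnot fin by (metis (no_types, lifting) finite_subset mem_Collect_eq psubsetI psubset_card_mono subsetI)
    then obtain s k where s: "s \<in> S" and k: "(f^^k) s = u" and D: "\<forall>m<k. (f^^m) s \<in> V - Out"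
      using less.hyps u by blast
    show ?thesis
      apply (rule bexI[OF _ s], rule exI[of _ "Suc k"])
      using k D u uv less_Suc_eq by auto
  qed
qed

lemma back_inj:
  "(f^^k) s = (f^^k') s' \<Longrightarrow> \<forall>m<k. (f^^m) s \<in> V - Out \<Longrightarrow> \<forall>m<k'. (f^^m) s' \<in> V - Out
   \<Longrightarrow> k \<le> k' \<Longrightarrow> s = (f^^(k'-k)) s'"
proof (induction k arbitrary: k')
  case 0 then show ?case by simp
next
  case (Suc k)
  then obtain j where j: "k' = Suc j" by (cases k') auto
  have "f ((f^^k) s) = f ((f^^j) s')" using Suc.prems j by simp
  then have "(f^^k) s = (f^^j) s'" using finj Suc.prems j by auto
  then show ?case using Suc j by auto
qed

lemma S_V: "S \<subseteq> V" unfolding S_def by auto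

lemma on_path: "s \<in> S \<Longrightarrow> v \<in> set (pth s) \<longleftrightarrow> (\<exists>k\<le>nn s. v = (f^^k) s)"
  unfolding pth_def by (auto simp del: upt_Suc simp: image_iff less_Suc_eq_le)

lemma main:
  "\<exists>C. path_cover V E In Out C \<and>
     (\<forall>v \<in> V. \<forall>w \<in> V. (\<exists>p \<in> C. is_arc p v w) \<longleftrightarrow> (v \<in> V - Out \<and> w = f v))"
proof (intro exI[of _ "pth ` S"] conjI)
  have dp: "directed_path V E (pth s)" if s: "s \<in> S" for s
  proof -
    have sV: "s \<in> V" using s S_V by auto
    note np = nn_props[OF sV]
    have Dj: "\<forall>m<j. (f^^m) s \<in> V - Out" if "j \<le> nn s" for j
      using np(2) that by auto
    have inj: "inj_on (\<lambda>i. (f^^i) s) {0..<Suc (nn s)}"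
    proof (rule inj_onI)
      fix i j assume i: "i \<in> {0..<Suc (nn s)}" and j: "j \<in> {0..<Suc (nn s)}" and e: "(f^^i) s = (f^^j) s"
      show "i = j"
      proof (rule ccontr)
        assume "i \<noteq> j"
        then consider "i < j" | "j < i" by linarith
        then show False
        proof cases
          case 1 then show False using chain_dist[OF sV Dj[of j]] j e by auto
        next
          case 2 then show False using chain_dist[OF sV Dj[of i]] i e by auto
        qed
      qed
    qed
    have dist: "distinct (pth s)" unfolding pth_def distinct_map using inj by (simp del: upt_Suc)
    have len: "length (pth s) = Suc (nn s)" unfolding pth_def by simp
    have nth: "pth s ! i = (f^^i) s" if "i < Suc (nn s)" for i
      unfolding pth_def using that by (simp del: upt_Suc add: nth_map_upt)
    have setV: "set (pth s) \<subseteq> V"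
    proof
      fix x assume "x \<in> set (pth s)"
      then obtain i where i: "i < Suc (nn s)" "x = pth s ! i" using len by (metis in_set_conv_nth)
      then have "i \<le> nn s" by simp
      then show "x \<in> V" using chain_le[OF sV Dj[of i], of i] i nth by auto
    qed
    have adj: "\<forall>i. Suc i < length (pth s) \<longrightarrow> E (pth s ! i) (pth s ! Suc i)"
    proof (intro allI impI)
      fix i assume "Suc i < length (pth s)"
      then have il: "i < nn s" using len by simp
      have "E ((f^^i) s) (f ((f^^i) s))" using fE np(2)[OF il] by blast
      then show "E (pth s ! i) (pth s ! Suc i)" using nth[of i] nth[of "Suc i"] il by simp
    qed
    have ne: "pth s \<noteq> []" using len by auto
    show ?thesis unfolding directed_path_def using ne dist setV adj by blast
  qed
  show "path_cover V E In Out (pth ` S)"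
    unfolding path_cover_def
  proof (intro conjI ballI)
    show "\<And>p. p \<in> pth ` S \<Longrightarrow> directed_path V E p" using dp by auto
  next
    fix v assume v: "v \<in> V"
    obtain s k where s: "s \<in> S" and k: "(f^^k) s = v" and D: "\<forall>m<k. (f^^m) s \<in> V - Out"
      using back_reach[OF v] by blast
    have sV: "s \<in> V" using s S_V by auto
    have "k \<le> nn s"
    proof (rule ccontr)
      assume "\<not> k \<le> nn s"
      then show False using D nn_props(1)[OF sV] by auto
    qed
    then have mem: "v \<in> set (pth s)" using on_path[OF s] k by auto
    show "\<exists>!p. p \<in> pth ` S \<and> v \<in> set p"
    proof (rule ex1I[of _ "pth s"])
      show "pth s \<in> pth ` S \<and> v \<in> set (pth s)" using s mem by auto
    next
      fix p assume "p \<in> pth ` S \<and> v \<in> set p"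
      then obtain s' where s': "s' \<in> S" and p: "p = pth s'" and m': "v \<in> set (pth s')" by auto
      have s'V: "s' \<in> V" using s' S_V by auto
      obtain k' where k': "k' \<le> nn s'" "v = (f^^k') s'" using on_path[OF s'] m' by auto
      have D': "\<forall>m<k'. (f^^m) s' \<in> V - Out" using nn_props(2)[OF s'V] k' by auto
      have notin: "x \<in> S \<Longrightarrow> x \<noteq> (f^^Suc j) y \<or> (f^^j) y \<notin> V - Out" for x j y
        unfolding S_def by auto
      have "s = s'"
      proof (cases "k \<le> k'")
        case True
        have e: "s = (f^^(k'-k)) s'" using back_inj[of k s k' s'] k k' D D' True by auto
        show ?thesis
        proof (cases "k' - k")
          case 0 then show ?thesis using e by simp
        next
          case (Suc j)
          then have "(f^^j) s' \<in> V - Out" using D' by auto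
          then show ?thesis using notin[OF s, of j s'] e Suc by auto
        qed
      next
        case False
        have e: "s' = (f^^(k-k')) s" using back_inj[of k' s' k s] k k' D D' False by auto
        show ?thesis
        proof (cases "k - k'")
          case 0 then show ?thesis using e by simp
        next
          case (Suc j)
          then have "(f^^j) s \<in> V - Out" using D by auto
          then show ?thesis using notin[OF s', of j s] e Suc by auto
        qed
      qed
      then show "p = pth s" using p by simp
    qed
  next
    fix p assume "p \<in> pth ` S"
    then obtain s where s: "s \<in> S" and p: "p = pth s" by auto
    have sV: "s \<in> V" using s S_V by auto
    note np = nn_props[OF sV]
    have "set p \<inter> In \<subseteq> {hd p}"
    proof
      fix x assume "x \<in> set p \<inter> In"
      then obtain k where k: "k \<le> nn s" "x = (f^^k) s" "x \<in> In" using on_path[OF s] p by auto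
      show "x \<in> {hd p}"
      proof (cases k)
        case 0 then show ?thesis using k p by (simp add: pth_def upt_conv_Cons del: upt_Suc)
      next
        case (Suc j)
        then have "(f^^j) s \<in> V - Out" using np(2) k by auto
        then show ?thesis using fV k Suc by auto
      qed
    qed
    then show "set p \<inter> In = {} \<or> set p \<inter> In = {hd p}" by auto
    have lastp: "last p = (f^^nn s) s" using p unfolding pth_def by simp
    have "set p \<inter> Out = {(f^^nn s) s}"
    proof
      show "set p \<inter> Out \<subseteq> {(f^^nn s) s}"
      proof
        fix x assume "x \<in> set p \<inter> Out"
        then obtain k where k: "k \<le> nn s" "x = (f^^k) s" "x \<in> Out" using on_path[OF s] p by auto
        have "\<not> k < nn s" using np(2)[of k] k by blast
        then have "k = nn s" using k(1) by linarith
        then show "x \<in> {(f^^nn s) s}" using k by simp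
      qed
      show "{(f^^nn s) s} \<subseteq> set p \<inter> Out" using on_path[OF s] p np(1) by auto
    qed
    then show "set p \<inter> Out = {last p}" using lastp by simp
  qed
  show "\<forall>v\<in>V. \<forall>w\<in>V. (\<exists>p\<in>pth ` S. is_arc p v w) = (v \<in> V - Out \<and> w = f v)"
  proof (intro ballI iffI)
    fix v w assume "\<exists>p\<in>pth ` S. is_arc p v w"
    then obtain s i where s: "s \<in> S" and i: "Suc i < length (pth s)" "pth s ! i = v" "pth s ! Suc i = w"
      unfolding is_arc_def by auto
    have sV: "s \<in> V" using s S_V by auto
    have il: "i < nn s" using i(1) unfolding pth_def by simp
    have "v = (f^^i) s" "w = (f^^Suc i) s" using i il unfolding pth_def by (simp_all add: nth_map_upt del: upt_Suc)
    then show "v \<in> V - Out \<and> w = f v" using nn_props(2)[OF sV il] by simp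
  next
    fix v w assume vV: "v \<in> V" and vw: "v \<in> V - Out \<and> w = f v"
    obtain s k where s: "s \<in> S" and k: "(f^^k) s = v" and D: "\<forall>m<k. (f^^m) s \<in> V - Out"
      using back_reach[OF vV] by blast
    have sV: "s \<in> V" using s S_V by auto
    have "k \<le> nn s"
    proof (rule ccontr)
      assume "\<not> k \<le> nn s"
      then show False using D nn_props(1)[OF sV] by auto
    qed
    moreover have "k \<noteq> nn s" using nn_props(1)[OF sV] k vw by auto
    ultimately have kl: "k < nn s" by simp
    have "is_arc (pth s) v w" unfolding is_arc_def
      apply (rule exI[of _ k])
      using kl k vw unfolding pth_def by (simp add: nth_map_upt del: upt_Suc)
    then show "\<exists>p\<in>pth ` S. is_arc p v w" using s by auto
  qed
qed

end

theorem mainTheorem2: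
  fixes V :: "'a set" and E :: "'a \<Rightarrow> 'a \<Rightarrow> bool" and In Out :: "'a set"
    and f :: "'a \<Rightarrow> 'a" and le :: "('a \<times> 'a) set"
  assumes "geometry V E In Out"
    and "is_flow V E In Out f le"
  shows "\<exists>C. path_cover V E In Out C \<and>
           (\<forall>v \<in> V. \<forall>w \<in> V. (\<exists>p \<in> C. is_arc p v w) \<longleftrightarrow> (v \<in> V - Out \<and> w = f v))"
  using assms
  unfolding geometry_def simple_graph_def is_flow_def partial_order_on_def preorder_on_def refl_on_def
  by (intro main[of V E Out f In le]) auto

end
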